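(* Let $f$ be a tempered distribution on $\mathbb{R}$, and let $\theta$ have sub-polynomial growth and $\omega$ have sub-exponential growth. Then for every $H\in\mathbb{R}$, $$\mathcal{D}^{ws}_f(H)\le \inf_{p\in\mathbb{R}}\big(Hp-\zeta_f(p)+1\big),$$ where $\zeta_f$ is the wavelet scaling function built from the $(\theta,\omega)$-leaders. In particular, if there is $c\in\mathbb{R}$ with $\zeta_f(p)=cp$ for all $p\in\mathbb{R}$, then for every real $H\neq c$ the set $\{x: h^{ws}_f(x)=H\}$ is empty, i.e. the weak-scaling exponent of $f$ is constant (equal to $c$) wherever it is finite.
   Context: Wavelets: $\{\psi_{j,k}(x)=2^{j/2}\psi(2^jx-k)\}$ is an $r$-smooth orthonormal wavelet basis of $L^2(\mathbb{R})$ with $r$ large enough, and $c_{j,k}=2^j\int f(x)\psi(2^jx-k)dx$ (duality pairing for tempered distributions). Two-microlocal spaces: $f\in C^{s,s'}(x_0)$ if there is $C$ with $|c_{j,k}|\le C2^{-sj}(1+|2^jx_0-k|)^{-s'}$ for all $j,k$ (wavelet basis with $r>\max(|s|,|s'|)$). $f\in\Gamma^s(x_0)$ if there exists $s'>0$ with $f\in C^{s,-s'}(x_0)$. The weak-scaling exponent is $h^{ws}_f(x_0)=\sup\{s: f\in\Gamma^s(x_0)\}$, and the weak-scaling spectrum is $\mathcal{D}^{ws}_f(H)=\dim_H\{x: h^{ws}_f(x)=H\}$ (Hausdorff dimension, with $\dim_H\emptyset=-\infty$). A function $\theta:\mathbb{N}\to\mathbb{R}^+$ has sub-polynomial growth if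 $\theta(j+1)\ge\theta(j)\ge j$ for all $j$ and $\limsup_{j\to\infty}\frac{\log(\theta(j)-j)}{\log j}<1$. A function $\omega:\mathbb{N}\to\mathbb{R}^+$ has sub-exponential growth if it is non-decreasing, $\omega(j)\to+\infty$ and $\frac{\log\omega(j)}{j}\to 0$. The $(\theta,\omega)$-neighbourhood $V_{(\theta,\omega)}(j,k)$ is the set of pairs $(j',k')$ with $j\le j'\le\theta(j)$ and $|k2^{-j}-k'2^{-j'}|\le \omega(j')2^{-j}$. The $(\theta,\omega)$-leaders are $d_{j,k}=\sup_{(j',k')\in V_{(\theta,\omega)}(j,k)}|c_{j',k'}|$. The wavelet scaling function is, for $p\in\mathbb{R}$, $$\zeta_f(p)=\liminf_{j\to+\infty}\frac{\log\Big(\omega(j)\,2^{-j}\sum_{k=l\cdot[2\omega(j)]}|d_{j,k}|^p\Big)}{\log(2^{-j})},$$ where the sum runs over the indices $k$ that are integer multiples $l\cdot[2\omega(j)]$ of $[2\omega(j)]$ (integer part), with $k2^{-j}$ in the fixed bounded interval on which $f$ is analyzed. *)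

theory Defs
  imports "HOL-Analysis.Analysis" "HOL-Library.Liminf_Limsup"
begin

definition schwartz_real :: "(real \<Rightarrow> real) \<Rightarrow> bool" where
  "schwartz_real \<phi> \<longleftrightarrow>
     (\<forall>n x. ((deriv ^^ n) \<phi>) differentiable (at x)) \<and>
     (\<forall>m n. bounded (range (\<lambda>x. \<bar>x\<bar> ^ m * (deriv ^^ n) \<phi> x)))"

definition schwartz :: "(real \<Rightarrow> complex) \<Rightarrow> bool" where
  "schwartz \<phi> \<longleftrightarrow> schwartz_real (\<lambda>x. Re (\<phi> x)) \<and> schwartz_real (\<lambda>x. Im (\<phi> x))"

definition schwartz_seminorm :: "nat \<Rightarrow> nat \<Rightarrow> (real \<Rightarrow> real) \<Rightarrow> real" where
  "schwartz_seminorm m n \<phi> = (SUP x. \<bar>x\<bar> ^ m * \<bar>(deriv ^^ n) \<phi> x\<bar>)"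

definition tempered_distribution :: "((real \<Rightarrow> complex) \<Rightarrow> complex) \<Rightarrow> bool" where
  "tempered_distribution T \<longleftrightarrow>
     (\<forall>\<phi> \<psi>. schwartz \<phi> \<longrightarrow> schwartz \<psi> \<longrightarrow> T (\<lambda>x. \<phi> x + \<psi> x) = T \<phi> + T \<psi>) \<and>
     (\<forall>a \<phi>. schwartz \<phi> \<longrightarrow> T (\<lambda>x. a * \<phi> x) = a * T \<phi>) \<and>
     (\<exists>C N. \<forall>\<phi>. schwartz \<phi> \<longrightarrow>
        cmod (T \<phi>) \<le> C * (\<Sum>m\<le>N. \<Sum>n\<le>N.
            schwartz_seminorm m n (\<lambda>x. Re (\<phi> x)) + schwartz_seminorm m n (\<lambda>x. Im (\<phi> x))))"

definition wav :: "(real \<Rightarrow> real) \<Rightarrow> int \<Rightarrow> int \<Rightarrow> real \<Rightarrow> real" where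
  "wav \<psi> j k x = 2 powr (real_of_int j / 2) * \<psi> (2 powr (real_of_int j) * x - real_of_int k)"

definition orthonormal_wavelet :: "(real \<Rightarrow> real) \<Rightarrow> bool" where
  "orthonormal_wavelet \<psi> \<longleftrightarrow>
     (\<forall>j k. wav \<psi> j k \<in> borel_measurable lborel \<and> integrable lborel (\<lambda>x. (wav \<psi> j k x)\<^sup>2)) \<and>
     (\<forall>j k j' k'. (LINT x|lborel. wav \<psi> j k x * wav \<psi> j' k' x)
                  = (if j = j' \<and> k = k' then 1 else 0)) \<and>
     (\<forall>g. g \<in> borel_measurable lborel \<longrightarrow> integrable lborel (\<lambda>x. (g x)\<^sup>2) \<longrightarrow>
          (\<forall>j k. (LINT x|lborel. g x * wav \<psi> j k x) = 0) \<longrightarrow> (AE x in lborel. g x = 0))"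

definition wcoef :: "(real \<Rightarrow> real) \<Rightarrow> ((real \<Rightarrow> complex) \<Rightarrow> complex) \<Rightarrow> nat \<Rightarrow> int \<Rightarrow> complex" where
  "wcoef \<psi> f j k = complex_of_real (2 ^ j) *
      f (\<lambda>x. complex_of_real (\<psi> (2 ^ j * x - real_of_int k)))"

text \<open>Two-microlocal space C^{s,s'}(x0) (coefficient characterisation).\<close>
definition two_microlocal :: "(nat \<Rightarrow> int \<Rightarrow> complex) \<Rightarrow> real \<Rightarrow> real \<Rightarrow> real \<Rightarrow> bool" where
  "two_microlocal c s s' x0 \<longleftrightarrow>
     (\<exists>C. \<forall>j k. cmod (c j k) \<le> C * 2 powr (- s * real j)
                   * (1 + \<bar>2 ^ j * x0 - real_of_int k\<bar>) powr (- s'))"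

definition Gamma_space :: "(nat \<Rightarrow> int \<Rightarrow> complex) \<Rightarrow> real \<Rightarrow> real \<Rightarrow> bool" where
  "Gamma_space c s x0 \<longleftrightarrow> (\<exists>s'>0. two_microlocal c s (- s') x0)"

definition weak_scaling_exp :: "(nat \<Rightarrow> int \<Rightarrow> complex) \<Rightarrow> real \<Rightarrow> ereal" where
  "weak_scaling_exp c x0 = (SUP s \<in> {s. Gamma_space c s x0}. ereal s)"

definition hausdorff_pre :: "real \<Rightarrow> real \<Rightarrow> real set \<Rightarrow> ennreal" where
  "hausdorff_pre s \<delta> A = (INF U \<in> {U :: nat \<Rightarrow> real set.
        A \<subseteq> (\<Union>i. U i) \<and> (\<forall>i. bounded (U i) \<and> diameter (U i) \<le> \<delta>)}.
        (\<Sum>i. ennreal (diameter (U i) powr s)))"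

definition hausdorff_measure :: "real \<Rightarrow> real set \<Rightarrow> ennreal" where
  "hausdorff_measure s A = (SUP \<delta> \<in> {0<..}. hausdorff_pre s \<delta> A)"

definition hausdorff_dim :: "real set \<Rightarrow> ereal" where
  "hausdorff_dim A = (if A = {} then - \<infinity>
      else (INF s \<in> {s. 0 \<le> s \<and> hausdorff_measure s A = 0}. ereal s))"

definition subpoly_growth :: "(nat \<Rightarrow> real) \<Rightarrow> bool" where
  "subpoly_growth \<theta> \<longleftrightarrow> (\<forall>j. \<theta> j > 0) \<and> (\<forall>j. real j \<le> \<theta> j \<and> \<theta> j \<le> \<theta> (Suc j)) \<and>
     limsup (\<lambda>j. if \<theta> j - real j = 0 then - \<infinity>
                  else ereal (ln (\<theta> j - real j) / ln (real j))) < 1"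

definition subexp_growth :: "(nat \<Rightarrow> real) \<Rightarrow> bool" where
  "subexp_growth \<omega> \<longleftrightarrow> (\<forall>j. \<omega> j > 0) \<and> mono \<omega> \<and> filterlim \<omega> at_top sequentially \<and>
     ((\<lambda>j. ln (\<omega> j) / real j) \<longlonglongrightarrow> 0)"

definition nbhd :: "(nat \<Rightarrow> real) \<Rightarrow> (nat \<Rightarrow> real) \<Rightarrow> nat \<Rightarrow> int \<Rightarrow> (nat \<times> int) set" where
  "nbhd \<theta> \<omega> j k = {(j', k'). j \<le> j' \<and> real j' \<le> \<theta> j \<and>
      \<bar>real_of_int k / 2 ^ j - real_of_int k' / 2 ^ j'\<bar> \<le> \<omega> j' / 2 ^ j}"

definition leader :: "(nat \<Rightarrow> real) \<Rightarrow> (nat \<Rightarrow> real) \<Rightarrow> (nat \<Rightarrow> int \<Rightarrow> complex) \<Rightarrow> nat \<Rightarrow> int \<Rightarrow> real" where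
  "leader \<theta> \<omega> c j k = (SUP jk' \<in> nbhd \<theta> \<omega> j k. cmod (c (fst jk') (snd jk')))"

text \<open>Structure function: sum over the sampled positions k = l\<cdot>[2\<omega>(j)]
  with k 2^{-j} \<in> [a,b]; convention 0 powr p = 0 (zero leaders
  do not contribute).\<close>
definition structure_fun :: "(nat \<Rightarrow> real) \<Rightarrow> (nat \<Rightarrow> real) \<Rightarrow> (nat \<Rightarrow> int \<Rightarrow> complex)
     \<Rightarrow> real \<Rightarrow> real \<Rightarrow> real \<Rightarrow> nat \<Rightarrow> real" where
  "structure_fun \<theta> \<omega> c a b p j =
     (\<Sum>k \<in> {k. (\<exists>l::int. k = l * \<lfloor>2 * \<omega> j\<rfloor>) \<and> a \<le> real_of_int k / 2 ^ j \<and> real_of_int k / 2 ^ j \<le> b}.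
         leader \<theta> \<omega> c j k powr p)"

definition scaling_fun :: "(nat \<Rightarrow> real) \<Rightarrow> (nat \<Rightarrow> real) \<Rightarrow> (nat \<Rightarrow> int \<Rightarrow> complex)
     \<Rightarrow> real \<Rightarrow> real \<Rightarrow> real \<Rightarrow> ereal" where
  "scaling_fun \<theta> \<omega> c a b p = liminf (\<lambda>j.
      let S = \<omega> j * 2 powr (- real j) * structure_fun \<theta> \<omega> c a b p j in
      if S = 0 then \<infinity> else ereal (ln S / ln (2 powr (- real j))))"

end

theory Submission
  imports Defs
begin


lemma omega_ge1: assumes "subexp_growth \<omega>" shows "eventually (\<lambda>j. 1 \<le> \<omega> j) sequentially"
  using assms unfolding subexp_growth_def filterlim_at_top by auto

lemma omega_small: assumes "subexp_growth \<omega>" "\<delta> > 0"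
  shows "eventually (\<lambda>j. \<omega> j \<le> 2 powr (\<delta> * real j)) sequentially"
proof -
  have t: "(\<lambda>j. ln (\<omega> j) / real j) \<longlonglongrightarrow> 0" using assms unfolding subexp_growth_def by auto
  have pos: "\<And>j. \<omega> j > 0" using assms unfolding subexp_growth_def by auto
  have "eventually (\<lambda>j. ln (\<omega> j) / real j < \<delta> * ln 2) sequentially"
    using order_tendstoD(2)[OF t] assms(2) by simp
  moreover have "eventually (\<lambda>j. j > (0::nat)) sequentially" by (simp add: eventually_gt_at_top)
  ultimately show ?thesis
  proof eventually_elim
    case (elim j)
    then have "ln (\<omega> j) < \<delta> * ln 2 * real j" by (simp add: divide_less_eq)
    then have "\<omega> j < exp (\<delta> * real j * ln 2)" using pos[of j]
      by (metis exp_less_cancel_iff exp_ln mult.commute mult.left_commute)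
    then show ?case by (simp add: powr_def)
  qed
qed

lemma theta_small: assumes "subpoly_growth \<theta>" "\<delta> > 0"
  shows "eventually (\<lambda>j. \<theta> j - real j \<le> \<delta> * real j) sequentially"
proof -
  define L where "L = limsup (\<lambda>j. if \<theta> j - real j = 0 then - \<infinity>
                  else ereal (ln (\<theta> j - real j) / ln (real j)))"
  have L1: "L < 1" using assms unfolding subpoly_growth_def L_def by auto
  have ge: "\<And>j. real j \<le> \<theta> j" using assms unfolding subpoly_growth_def by auto
  obtain r where r: "L < ereal r" "ereal r < 1"
    using ereal_dense2[OF L1] by blast
  then have r2: "r < 1" by simp
  have ev1: "eventually (\<lambda>j. (if \<theta> j - real j = 0 then - \<infinity>
                  else ereal (ln (\<theta> j - real j) / ln (real j))) < ereal r) sequentially"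
    using Limsup_lessD[OF r(1)[unfolded L_def]] .
  have "((\<lambda>x::real. x powr (r - 1)) \<longlongrightarrow> 0) at_top"
    using r2 by (intro tendsto_neg_powr) (auto simp: filterlim_ident)
  then have "((\<lambda>j. real j powr (r - 1)) \<longlongrightarrow> 0) sequentially"
    using filterlim_compose filterlim_real_sequentially by blast
  then have ev2: "eventually (\<lambda>j. real j powr (r - 1) < \<delta>) sequentially"
    using order_tendstoD(2) assms(2) by blast
  have ev3: "eventually (\<lambda>j. j \<ge> (2::nat)) sequentially" by (simp add: eventually_ge_at_top)
  from ev1 ev2 ev3 show ?thesis
  proof eventually_elim
    case (elim j)
    show ?case
    proof (cases "\<theta> j - real j = 0")
      case True then show ?thesis using assms(2) by simp
    next
      case False
      then have pos: "\<theta> j - real j > 0" using ge[of j] by simp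
      have lnj: "ln (real j) > 0" using elim(3) by simp
      from elim(1) False have "ln (\<theta> j - real j) / ln (real j) < r" by simp
      then have "ln (\<theta> j - real j) < r * ln (real j)" using lnj by (simp add: divide_less_eq)
      moreover have "ln (real j powr r) = r * ln (real j)" using elim(3) by (simp add: ln_powr)
      ultimately have "ln (\<theta> j - real j) < ln (real j powr r)" by simp
      then have "\<theta> j - real j < real j powr r" using pos elim(3)
        by (subst (asm) ln_less_cancel_iff) auto
      also have "real j powr r = real j powr (r - 1) * real j" using elim(3)
        by (simp add: powr_diff)
      also have "\<dots> \<le> \<delta> * real j" using elim(2) by (intro mult_right_mono) auto
      finally show ?thesis by simp
    qed
  qed
qed

lemma omega_theta_small: assumes "subpoly_growth \<theta>" "subexp_growth \<omega>" "\<delta> > 0"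
  shows "eventually (\<lambda>j. \<omega> (nat \<lfloor>\<theta> j\<rfloor>) \<le> 2 powr (\<delta> * real j)) sequentially"
proof -
  have ge: "\<And>j. real j \<le> \<theta> j" using assms unfolding subpoly_growth_def by auto
  obtain N where N: "\<And>n. n \<ge> N \<Longrightarrow> \<omega> n \<le> 2 powr (\<delta> / 2 * real n)"
    using omega_small[OF assms(2), of "\<delta>/2"] assms(3) unfolding eventually_sequentially by auto
  have "eventually (\<lambda>j. \<theta> j - real j \<le> 1 * real j) sequentially"
    using theta_small[OF assms(1), of 1] by simp
  moreover have "eventually (\<lambda>j. j \<ge> N) sequentially" by (simp add: eventually_ge_at_top)
  ultimately show ?thesis
  proof eventually_elim
    case (elim j)
    define n where "n = nat \<lfloor>\<theta> j\<rfloor>"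
    have "j \<le> n" using ge[of j] unfolding n_def by (simp add: le_nat_iff le_floor_iff)
    have f0: "0 \<le> \<lfloor>\<theta> j\<rfloor>" using ge[of j] proof -
      have "0 \<le> \<theta> j" using ge[of j] of_nat_0_le_iff order_trans by blast
      then show ?thesis by simp
    qed
    then have "real n = real_of_int \<lfloor>\<theta> j\<rfloor>" unfolding n_def by simp
    then have "real n \<le> \<theta> j" using of_int_floor_le by simp
    then have "real n \<le> 2 * real j" using elim(1) by simp
    have "\<omega> n \<le> 2 powr (\<delta> / 2 * real n)" using N \<open>j \<le> n\<close> elim(2) by simp
    also have "\<dots> \<le> 2 powr (\<delta> * real j)" using \<open>real n \<le> 2 * real j\<close> assms(3) by simp
    finally show ?case unfolding n_def .
  qed
qed



definition Kset :: "(nat \<Rightarrow> real) \<Rightarrow> real \<Rightarrow> real \<Rightarrow> nat \<Rightarrow> int set" where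
  "Kset \<omega> a b j = {k. (\<exists>l::int. k = l * \<lfloor>2 * \<omega> j\<rfloor>) \<and> a \<le> real_of_int k / 2 ^ j \<and> real_of_int k / 2 ^ j \<le> b}"

lemma Kset_finite: "finite (Kset \<omega> a b j)"
proof -
  have "Kset \<omega> a b j \<subseteq> {\<lceil>a * 2^j\<rceil>..\<lfloor>b * 2^j\<rfloor>}"
  proof
    fix k assume "k \<in> Kset \<omega> a b j"
    then have "a \<le> real_of_int k / 2 ^ j" "real_of_int k / 2 ^ j \<le> b" unfolding Kset_def by auto
    then have "a * 2^j \<le> real_of_int k" "real_of_int k \<le> b * 2^j" by (simp_all add: field_simps)
    then show "k \<in> {\<lceil>a * 2^j\<rceil>..\<lfloor>b * 2^j\<rfloor>}" by (simp add: ceiling_le_iff le_floor_iff)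
  qed
  then show ?thesis using finite_subset by blast
qed

lemma structure_fun_Kset: "structure_fun \<theta> \<omega> c a b p j = (\<Sum>k\<in>Kset \<omega> a b j. leader \<theta> \<omega> c j k powr p)"
  unfolding structure_fun_def Kset_def by simp

lemma count_bound: assumes "subexp_growth \<omega>" "ereal z < scaling_fun \<theta> \<omega> c a b p"
  shows "eventually (\<lambda>j. (\<Sum>k\<in>Kset \<omega> a b j. leader \<theta> \<omega> c j k powr p) \<le> 2 powr ((1 - z) * real j)) sequentially"
proof -
  have pos: "\<And>j. \<omega> j > 0" using assms unfolding subexp_growth_def by auto
  have ev: "eventually (\<lambda>j. ereal z < (let S = \<omega> j * 2 powr (- real j) * structure_fun \<theta> \<omega> c a b p j in
      if S = 0 then \<infinity> else ereal (ln S / ln (2 powr (- real j))))) sequentially"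
    using less_LiminfD[OF assms(2)[unfolded scaling_fun_def]] .
  from ev omega_ge1[OF assms(1)] eventually_gt_at_top[of "0::nat"] show ?thesis
  proof eventually_elim
    case (elim j)
    define \<Sigma> where "\<Sigma> = (\<Sum>k\<in>Kset \<omega> a b j. leader \<theta> \<omega> c j k powr p)"
    define S where "S = \<omega> j * 2 powr (- real j) * \<Sigma>"
    have Sdef: "S = \<omega> j * 2 powr (- real j) * structure_fun \<theta> \<omega> c a b p j"
      unfolding S_def \<Sigma>_def structure_fun_Kset ..
    have \<Sigma>0: "\<Sigma> \<ge> 0" unfolding \<Sigma>_def by (intro sum_nonneg) auto
    show ?case
    proof (cases "S = 0")
      case True
      then have "\<Sigma> = 0" unfolding S_def using pos[of j] by simp
      then show ?thesis unfolding \<Sigma>_def[symmetric] by simp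
    next
      case False
      then have Spos: "S > 0" unfolding S_def using pos[of j] \<Sigma>0 by (simp add: less_le)
      from elim(1) False have "z < ln S / ln (2 powr (- real j))" unfolding Sdef[symmetric] by (simp add: Let_def)
      moreover have "ln (2 powr (- real j)) = - real j * ln 2" by (simp add: ln_powr)
      moreover have "- real j * ln 2 < 0" using elim(3) by simp
      ultimately have "ln S < z * (- real j * ln 2)"
        using neg_less_divide_eq by metis
      then have "ln S < ln (2 powr (- z * real j))" by (simp add: ln_powr)
      then have "S < 2 powr (- z * real j)" using Spos ln_less_cancel_iff[of S "2 powr (- z * real j)"] by simp
      then have "\<omega> j * \<Sigma> < 2 powr (- z * real j) * 2 powr (real j)"
        unfolding S_def by (simp add: powr_minus field_simps)
      moreover have "\<Sigma> \<le> \<omega> j * \<Sigma>" using elim(2) \<Sigma>0 by (simp add: mult_le_cancel_right1)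
      ultimately have "\<Sigma> < 2 powr (- z * real j) * 2 powr (real j)" by simp
      also have "\<dots> = 2 powr ((1 - z) * real j)" by (simp add: powr_add[symmetric] algebra_simps)
      finally show ?thesis unfolding \<Sigma>_def by simp
    qed
  qed
qed

lemma card_bound:
  assumes "finite K" "G \<subseteq> K" "\<And>k. k \<in> K \<Longrightarrow> 0 \<le> f k" "\<And>k. k \<in> G \<Longrightarrow> t \<le> f k" "sum f K \<le> U" "t > 0"
  shows "real (card G) \<le> U / t"
proof -
  have "real (card G) * t = (\<Sum>k\<in>G. t)" by simp
  also have "\<dots> \<le> sum f G" using assms(4) by (intro sum_mono) auto
  also have "\<dots> \<le> sum f K" using assms by (intro sum_mono2) auto
  finally show ?thesis using assms(5,6) by (simp add: le_divide_eq)
qed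




lemma round_mult:
  fixes k m :: int assumes "m > 0"
  shows "\<bar>2 * (k - m * ((2*k+m) div (2*m)))\<bar> \<le> m"
proof -
  define q where "q = (2*k+m) div (2*m)"
  define r where "r = (2*k+m) mod (2*m)"
  have e: "2*k+m = 2*m*q + r" unfolding q_def r_def by simp
  have "0 \<le> r" "r < 2*m" unfolding r_def using assms by simp_all
  then show ?thesis unfolding q_def[symmetric] using e by (simp add: algebra_simps abs_le_iff)
qed

lemma point_bound:
  fixes s0 s1 \<delta> \<eta>' \<epsilon> H C0 T W D' cm :: real and j :: nat
  assumes "C0 \<ge> 1" "s0 > 0" "\<delta> > 0" "0 \<le> T" "T \<le> \<delta> * j" "1 \<le> W" "W \<le> 2 powr (\<delta> * j)"
    "0 \<le> D'" "1 + D' \<le> 2 powr T * 4 * 2 powr (\<eta>' * j) * W" "C0 * 4 powr s0 \<le> 2 powr (\<delta> * j)"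
    "\<delta> * (1 + \<bar>s1\<bar> + 2 * s0) \<le> \<epsilon> / 4" "s0 * \<eta>' \<le> \<epsilon> / 8" "s1 > H - \<epsilon> / 2"
    "cm \<le> C0 * 2 powr (- s1 * (j + T)) * (1 + D') powr s0" "\<epsilon> > 0"
  shows "cm \<le> 2 powr (- (H - \<epsilon>) * j)"
proof -
  have "1 + D' \<le> 2 powr T * 4 * 2 powr (\<eta>' * j) * 2 powr (\<delta> * j)"
    using assms(9) assms(7) by (smt (verit) mult_left_mono powr_ge_zero mult_nonneg_nonneg)
  also have "\<dots> \<le> 4 * 2 powr ((2 * \<delta> + \<eta>') * j)"
  proof -
    have "2 powr T \<le> 2 powr (\<delta> * j)" using assms(5) by simp
    then have "2 powr T * 4 * 2 powr (\<eta>' * j) * 2 powr (\<delta> * j) \<le> 2 powr (\<delta> * j) * 4 * 2 powr (\<eta>' * j) * 2 powr (\<delta> * j)"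
      by (intro mult_right_mono) auto
    also have "\<dots> = 4 * 2 powr ((2 * \<delta> + \<eta>') * j)" by (simp add: powr_add[symmetric] algebra_simps)
    finally show ?thesis .
  qed
  finally have d1: "1 + D' \<le> 4 * 2 powr ((2 * \<delta> + \<eta>') * j)" .
  have "(1 + D') powr s0 \<le> (4 * 2 powr ((2 * \<delta> + \<eta>') * j)) powr s0"
    using d1 assms(2,8) by (intro powr_mono2) auto
  also have "\<dots> = 4 powr s0 * 2 powr (s0 * (2 * \<delta> + \<eta>') * j)"
    by (simp add: powr_mult powr_powr algebra_simps)
  finally have d2: "(1 + D') powr s0 \<le> 4 powr s0 * 2 powr (s0 * (2 * \<delta> + \<eta>') * j)" .
  have d3: "2 powr (- s1 * (j + T)) \<le> 2 powr (- s1 * j + \<bar>s1\<bar> * \<delta> * j)"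
  proof -
    have "- s1 * T \<le> \<bar>s1\<bar> * T" using assms(4) by (metis abs_ge_minus_self minus_mult_left mult_right_mono)
    also have "\<dots> \<le> \<bar>s1\<bar> * (\<delta> * j)" using assms(5) by (intro mult_left_mono) auto
    finally show ?thesis by (simp add: algebra_simps)
  qed
  have "cm \<le> C0 * 2 powr (- s1 * (j + T)) * (1 + D') powr s0" by fact
  also have "\<dots> \<le> C0 * 2 powr (- s1 * j + \<bar>s1\<bar> * \<delta> * j) * (4 powr s0 * 2 powr (s0 * (2 * \<delta> + \<eta>') * j))"
    using d2 d3 assms(1) by (intro mult_mono) auto
  also have "\<dots> = (C0 * 4 powr s0) * 2 powr ((- s1 + \<bar>s1\<bar> * \<delta> + s0 * (2 * \<delta> + \<eta>')) * j)"
    by (simp add: powr_add[symmetric] algebra_simps)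
  also have "\<dots> \<le> 2 powr (\<delta> * j) * 2 powr ((- s1 + \<bar>s1\<bar> * \<delta> + s0 * (2 * \<delta> + \<eta>')) * j)"
    using assms(10) by (intro mult_right_mono) auto
  also have "\<dots> = 2 powr ((- s1 + \<delta> * (1 + \<bar>s1\<bar> + 2 * s0) + s0 * \<eta>') * j)"
    by (simp add: powr_add[symmetric] algebra_simps)
  also have "\<dots> \<le> 2 powr (- (H - \<epsilon>) * j)"
  proof -
    have "- s1 + \<delta> * (1 + \<bar>s1\<bar> + 2 * s0) + s0 * \<eta>' \<le> - (H - \<epsilon>)"
      using assms(11,12,13,15) by linarith
    then show ?thesis by (intro powr_mono mult_right_mono) auto
  qed
  finally show ?thesis .
qed


lemma viol_bound:
  fixes C0 s0 \<sigma> P \<epsilon> H s1 cm J' :: real and j :: nat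
  assumes "C0 > 0" "s0 > 0" "\<sigma> > 0" "P \<ge> 1" "J' \<ge> 0"
    "C0 * 2 powr (\<epsilon> * J') * 2 powr (- (H + \<epsilon> / 2) * j) * P powr (s0 + \<sigma>) < cm"
    "cm \<le> C0 * 2 powr (- s1 * j) * P powr s0" "s1 > H - \<epsilon> / 2" "\<epsilon> > 0"
  shows "J' < j" "P < 2 powr (\<epsilon> / \<sigma> * j)"
proof -
  have P0: "P > 0" using assms(4) by simp
  have "C0 * (2 powr (\<epsilon> * J' - (H + \<epsilon> / 2) * j) * P powr \<sigma> * P powr s0) < C0 * (2 powr (- s1 * j) * P powr s0)"
  proof -
    have "C0 * 2 powr (\<epsilon> * J') * 2 powr (- (H + \<epsilon> / 2) * j) * P powr (s0 + \<sigma>)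
       = C0 * (2 powr (\<epsilon> * J' - (H + \<epsilon> / 2) * j) * P powr \<sigma> * P powr s0)"
      by (simp add: powr_add[symmetric] mult_ac) (simp add: powr_add[symmetric] algebra_simps)
    then show ?thesis using assms(6,7) by (metis mult.assoc order_less_le_trans)
  qed
  then have "2 powr (\<epsilon> * J' - (H + \<epsilon> / 2) * j) * P powr \<sigma> * P powr s0 < 2 powr (- s1 * j) * P powr s0"
    using assms(1) by simp
  then have A: "2 powr (\<epsilon> * J' - (H + \<epsilon> / 2) * j) * P powr \<sigma> < 2 powr (- s1 * j)"
    using P0 by simp
  have P1: "P powr \<sigma> \<ge> 1" using assms(3,4) by (simp add: ge_one_powr_ge_zero)
  have "2 powr (\<epsilon> * J' - (H + \<epsilon> / 2) * j) \<le> 2 powr (\<epsilon> * J' - (H + \<epsilon> / 2) * j) * P powr \<sigma>"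
    using P1 by simp
  with A have "2 powr (\<epsilon> * J' - (H + \<epsilon> / 2) * j) < 2 powr (- s1 * j)" by linarith
  then have B: "\<epsilon> * J' < (H + \<epsilon> / 2 - s1) * j" by (simp add: algebra_simps)
  have "(H + \<epsilon> / 2 - s1) * j \<le> \<epsilon> * j" using assms(8) by (intro mult_right_mono) auto
  with B have "\<epsilon> * J' < \<epsilon> * j" by linarith
  then show "J' < j" using assms(9) by simp
  have "P powr \<sigma> < 2 powr (- s1 * j) / 2 powr (\<epsilon> * J' - (H + \<epsilon> / 2) * j)"
    using A by (simp add: field_simps)
  also have "\<dots> = 2 powr ((H + \<epsilon> / 2 - s1) * j - \<epsilon> * J')" by (simp add: powr_diff[symmetric] algebra_simps)
  also have "\<dots> \<le> 2 powr (\<epsilon> * j)"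
  proof -
    have "(H + \<epsilon> / 2 - s1) * j \<le> \<epsilon> * j" using assms(8) by (intro mult_right_mono) auto
    moreover have "0 \<le> \<epsilon> * J'" using assms(5,9) by simp
    ultimately show ?thesis by simp
  qed
  also have "\<dots> = (2 powr (\<epsilon> / \<sigma> * j)) powr \<sigma>" using assms(3) by (simp add: powr_powr)
  finally have "P powr \<sigma> < (2 powr (\<epsilon> / \<sigma> * j)) powr \<sigma>" .
  then show "P < 2 powr (\<epsilon> / \<sigma> * j)"
  proof (rule contrapos_pp)
    assume "\<not> P < 2 powr (\<epsilon> / \<sigma> * j)"
    then have "2 powr (\<epsilon> / \<sigma> * j) \<le> P" by simp
    then have "(2 powr (\<epsilon> / \<sigma> * j)) powr \<sigma> \<le> P powr \<sigma>"
      using assms(3) by (intro powr_mono2) auto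
    then show "\<not> P powr \<sigma> < (2 powr (\<epsilon> / \<sigma> * j)) powr \<sigma>" by simp
  qed
qed





lemma pow2_tendsto0: assumes "e < 0" shows "(\<lambda>j. 2 powr (e * real j)) \<longlonglongrightarrow> 0"
proof -
  have "2 powr e < 2 powr 0" using assms by (intro powr_less_mono) auto
  then have "(\<lambda>j. (2 powr e) ^ j) \<longlonglongrightarrow> 0" by (intro LIMSEQ_power_zero) simp
  moreover have "\<And>j. 2 powr (e * real j) = (2 powr e) ^ j" by (simp add: powr_powr[symmetric] powr_realpow)
  ultimately show ?thesis by simp
qed

lemma pow2_large: assumes "\<delta> > 0" shows "eventually (\<lambda>j. M \<le> 2 powr (\<delta> * real j)) sequentially"
proof -
  have "eventually (\<lambda>j. real j \<ge> M / (\<delta> * ln 2)) sequentially"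
    by (simp add: eventually_sequentially) (meson real_arch_simple order_trans of_nat_le_iff)
  then show ?thesis
  proof eventually_elim
    case (elim j)
    then have "M \<le> \<delta> * real j * ln 2" using assms by (simp add: divide_le_eq mult.commute mult.left_commute)
    also have "\<dots> \<le> 1 + \<delta> * real j * ln 2" by simp
    also have "\<dots> \<le> exp (\<delta> * real j * ln 2)" by (rule exp_ge_add_one_self)
    also have "\<dots> = 2 powr (\<delta> * real j)" by (simp add: powr_def)
    finally show ?case .
  qed
qed


lemma witness:
  assumes th: "subpoly_growth \<theta>" and om: "subexp_growth \<omega>"
    and xa: "a < x" and xb: "x < b" and hx: "weak_scaling_exp c x = ereal H"
    and ep: "\<epsilon> > 0" and et: "\<eta> > 0"
  shows "\<exists>j\<ge>J. \<exists>k\<in>Kset \<omega> a b j. 2 powr (- (H + \<epsilon>) * real j) \<le> leader \<theta> \<omega> c j k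
            \<and> leader \<theta> \<omega> c j k \<le> 2 powr (- (H - \<epsilon>) * real j)
            \<and> \<bar>x - real_of_int k / 2 ^ j\<bar> \<le> 2 * 2 powr ((\<eta> - 1) * real j)"
proof -
  have thge: "\<And>j. real j \<le> \<theta> j" using th unfolding subpoly_growth_def by auto
  have ompos: "\<And>j. \<omega> j > 0" and ommono: "mono \<omega>" using om[unfolded subexp_growth_def] by blast+
  have "ereal (H - \<epsilon>/2) < weak_scaling_exp c x" using hx ep by simp
  then obtain s1 where s1: "Gamma_space c s1 x" "H - \<epsilon>/2 < s1"
    unfolding weak_scaling_exp_def less_SUP_iff by auto
  from s1(1) obtain s0 C1 where s0: "s0 > 0" and C1: "\<forall>j k. cmod (c j k) \<le> C1 * 2 powr (- s1 * real j) * (1 + \<bar>2 ^ j * x - real_of_int k\<bar>) powr s0"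
    unfolding Gamma_space_def two_microlocal_def by auto
  define C0 where "C0 = max C1 1"
  have C0: "C0 \<ge> 1" by (simp add: C0_def)
  have UB: "cmod (c j k) \<le> C0 * 2 powr (- s1 * real j) * (1 + \<bar>2 ^ j * x - real_of_int k\<bar>) powr s0" for j k
  proof -
    have "C1 * 2 powr (- s1 * real j) * (1 + \<bar>2 ^ j * x - real_of_int k\<bar>) powr s0 \<le> C0 * 2 powr (- s1 * real j) * (1 + \<bar>2 ^ j * x - real_of_int k\<bar>) powr s0"
      unfolding C0_def by (intro mult_right_mono) auto
    then show ?thesis using C1 by (meson order_trans)
  qed
  have notG: "\<not> Gamma_space c (H + \<epsilon>/2) x"
  proof
    assume "Gamma_space c (H + \<epsilon>/2) x"
    then have "ereal (H + \<epsilon>/2) \<le> weak_scaling_exp c x" unfolding weak_scaling_exp_def by (intro SUP_upper) auto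
    then show False using hx ep by simp
  qed
  define \<eta>' where "\<eta>' = min (min \<eta> (1/2)) (\<epsilon> / (8 * s0))"
  have \<eta>'pos: "\<eta>' > 0" using et ep s0 by (simp add: \<eta>'_def)
  have \<eta>'le: "\<eta>' \<le> \<eta>" "\<eta>' \<le> 1/2" by (simp_all add: \<eta>'_def)
  have "\<eta>' \<le> \<epsilon> / (8 * s0)" by (simp add: \<eta>'_def)
  then have s0\<eta>: "s0 * \<eta>' \<le> \<epsilon> / 8" using s0 by (simp add: le_divide_eq mult.commute)
  define \<sigma> where "\<sigma> = \<epsilon> / \<eta>'"
  have \<sigma>pos: "\<sigma> > 0" unfolding \<sigma>_def using ep \<eta>'pos by simp
  have \<sigma>\<eta>: "\<epsilon> / \<sigma> = \<eta>'" unfolding \<sigma>_def using ep \<eta>'pos by simp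
  define Q where "Q = 1 + \<bar>s1\<bar> + 2 * s0"
  have Qpos: "Q > 0" unfolding Q_def using s0 by (simp add: add_pos_nonneg)
  define \<delta> where "\<delta> = \<epsilon> / (4 * Q)"
  have \<delta>pos: "\<delta> > 0" unfolding \<delta>_def using ep Qpos by simp
  have "\<delta> * Q = \<epsilon> / 4" unfolding \<delta>_def using Qpos by simp
  then have \<delta>le: "\<delta> * (1 + \<bar>s1\<bar> + 2 * s0) \<le> \<epsilon> / 4" unfolding Q_def by simp
  have e3: "eventually (\<lambda>j. 2 * 2 powr ((\<eta>' - 1) * real j) < min (x - a) (b - x)) sequentially"
  proof -
    have "(\<lambda>j. 2 powr ((\<eta>' - 1) * real j)) \<longlonglongrightarrow> 0" using \<eta>'le by (intro pow2_tendsto0) simp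
    moreover have "min (x - a) (b - x) / 2 > 0" using xa xb by simp
    ultimately have "eventually (\<lambda>j. 2 powr ((\<eta>' - 1) * real j) < min (x - a) (b - x) / 2) sequentially"
      using order_tendstoD(2) by blast
    then show ?thesis by eventually_elim simp
  qed
  have ev: "eventually (\<lambda>j. 1 \<le> \<omega> j \<and> \<omega> j \<le> 2 powr (\<eta>' * real j) \<and>
       2 * 2 powr ((\<eta>' - 1) * real j) < min (x - a) (b - x) \<and> \<theta> j - real j \<le> \<delta> * real j \<and>
       \<omega> (nat \<lfloor>\<theta> j\<rfloor>) \<le> 2 powr (\<delta> * real j) \<and> C0 * 4 powr s0 \<le> 2 powr (\<delta> * real j)) sequentially"
    using omega_ge1[OF om] omega_small[OF om \<eta>'pos] e3 theta_small[OF th \<delta>pos]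
      omega_theta_small[OF th om \<delta>pos] pow2_large[OF \<delta>pos, of "C0 * 4 powr s0"]
    by eventually_elim auto
  then obtain N where N: "\<And>j. j \<ge> N \<Longrightarrow> 1 \<le> \<omega> j \<and> \<omega> j \<le> 2 powr (\<eta>' * real j) \<and>
       2 * 2 powr ((\<eta>' - 1) * real j) < min (x - a) (b - x) \<and> \<theta> j - real j \<le> \<delta> * real j \<and>
       \<omega> (nat \<lfloor>\<theta> j\<rfloor>) \<le> 2 powr (\<delta> * real j) \<and> C0 * 4 powr s0 \<le> 2 powr (\<delta> * real j)"
    unfolding eventually_sequentially by blast
  define J' where "J' = max J N"
  have "\<not> two_microlocal c (H + \<epsilon>/2) (- (s0 + \<sigma>)) x" using notG s0 \<sigma>pos unfolding Gamma_space_def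
    by (metis add_pos_pos)
  then have "\<forall>C. \<exists>j k. \<not> cmod (c j k) \<le> C * 2 powr (- (H + \<epsilon>/2) * real j) * (1 + \<bar>2 ^ j * x - real_of_int k\<bar>) powr (s0 + \<sigma>)"
    unfolding two_microlocal_def by (simp add: add.commute)
  then obtain j k where viol: "C0 * 2 powr (\<epsilon> * real J') * 2 powr (- (H + \<epsilon>/2) * real j) * (1 + \<bar>2 ^ j * x - real_of_int k\<bar>) powr (s0 + \<sigma>) < cmod (c j k)"
    by (meson not_le)
  define P where "P = 1 + \<bar>2 ^ j * x - real_of_int k\<bar>"
  have P1: "P \<ge> 1" unfolding P_def by simp
  have C0pos: "C0 > 0" using C0 by simp
  have J0: "real J' \<ge> 0" by simp
  note vb = viol_bound[OF C0pos s0 \<sigma>pos P1 J0 viol[folded P_def] UB[of j k, folded P_def] s1(2) ep]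
  have jJ: "J \<le> j" "N \<le> j" using vb(1) unfolding J'_def by auto
  have Pb: "P < 2 powr (\<eta>' * real j)" using vb(2) \<sigma>\<eta> by simp
  note Nj = N[OF jJ(2)]
  have om1: "1 \<le> \<omega> j" and om2: "\<omega> j \<le> 2 powr (\<eta>' * real j)"
    and e3j: "2 * 2 powr ((\<eta>' - 1) * real j) < min (x - a) (b - x)"
    and th1: "\<theta> j - real j \<le> \<delta> * real j" and om3: "\<omega> (nat \<lfloor>\<theta> j\<rfloor>) \<le> 2 powr (\<delta> * real j)"
    and C0b: "C0 * 4 powr s0 \<le> 2 powr (\<delta> * real j)" using Nj by auto
  define m where "m = \<lfloor>2 * \<omega> j\<rfloor>"
  have m2: "m \<ge> 2" unfolding m_def using om1 by (simp add: le_floor_iff)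
  have mle: "real_of_int m \<le> 2 * \<omega> j" unfolding m_def by simp
  define l where "l = (2*k+m) div (2*m)"
  define ks where "ks = l * m"
  have "\<bar>2 * (k - m * l)\<bar> \<le> m" unfolding l_def using round_mult[of m k] m2 by simp
  then have "real_of_int \<bar>2 * (k - m * l)\<bar> \<le> real_of_int m" by (simp only: of_int_le_iff)
  then have "\<bar>2 * (real_of_int k - real_of_int m * real_of_int l)\<bar> \<le> real_of_int m" by simp
  then have "2 * \<bar>real_of_int k - real_of_int ks\<bar> \<le> real_of_int m" unfolding ks_def
    by (simp only: abs_mult of_int_mult mult.commute[of "real_of_int l"])
  then have dk: "\<bar>real_of_int k - real_of_int ks\<bar> \<le> \<omega> j" using mle by simp
  have p2: "(2::real) ^ j = 2 powr real j" by (simp add: powr_realpow)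
  have p2pos: "(2::real) ^ j > 0" by simp
  have dx: "\<bar>x - real_of_int k / 2 ^ j\<bar> = (P - 1) / 2 ^ j"
  proof -
    have "x - real_of_int k / 2 ^ j = (2 ^ j * x - real_of_int k) / 2 ^ j" by (simp add: field_simps)
    then show ?thesis unfolding P_def by simp
  qed
  have xks0: "\<bar>x - real_of_int ks / 2 ^ j\<bar> \<le> (P - 1 + \<omega> j) / 2 ^ j"
  proof -
    have "x - real_of_int ks / 2 ^ j = (x - real_of_int k / 2 ^ j) + (real_of_int k - real_of_int ks) / 2 ^ j"
      by (simp add: field_simps)
    then have "\<bar>x - real_of_int ks / 2 ^ j\<bar> \<le> \<bar>x - real_of_int k / 2 ^ j\<bar> + \<bar>(real_of_int k - real_of_int ks) / 2 ^ j\<bar>"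
      by (metis abs_triangle_ineq)
    also have "\<bar>(real_of_int k - real_of_int ks) / 2 ^ j\<bar> = \<bar>real_of_int k - real_of_int ks\<bar> / 2 ^ j"
      by (simp add: abs_divide)
    finally have "\<bar>x - real_of_int ks / 2 ^ j\<bar> \<le> \<bar>x - real_of_int k / 2 ^ j\<bar> + \<bar>real_of_int k - real_of_int ks\<bar> / 2 ^ j" .
    also have "\<dots> \<le> (P - 1) / 2 ^ j + \<omega> j / 2 ^ j" unfolding dx using dk by (simp add: divide_right_mono)
    finally show ?thesis by (simp add: add_divide_distrib)
  qed
  have "(P - 1 + \<omega> j) / 2 ^ j \<le> 2 * 2 powr ((\<eta>' - 1) * real j)"
  proof -
    have "P - 1 + \<omega> j \<le> 2 * 2 powr (\<eta>' * real j)" using Pb om2 by simp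
    then have "(P - 1 + \<omega> j) / 2 ^ j \<le> 2 * 2 powr (\<eta>' * real j) / 2 powr real j" unfolding p2
      by (simp add: divide_right_mono)
    also have "\<dots> = 2 * 2 powr ((\<eta>' - 1) * real j)" by (simp add: powr_diff algebra_simps)
    finally show ?thesis .
  qed
  with xks0 have xks: "\<bar>x - real_of_int ks / 2 ^ j\<bar> \<le> 2 * 2 powr ((\<eta>' - 1) * real j)" by simp
  have ksK: "ks \<in> Kset \<omega> a b j"
  proof -
    have "\<bar>x - real_of_int ks / 2 ^ j\<bar> < min (x - a) (b - x)" using xks e3j by linarith
    then have "a \<le> real_of_int ks / 2 ^ j" "real_of_int ks / 2 ^ j \<le> b" by (simp_all add: abs_less_iff)
    moreover have "ks = l * \<lfloor>2 * \<omega> j\<rfloor>" unfolding ks_def m_def ..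
    ultimately show ?thesis unfolding Kset_def by blast
  qed
  have rad: "\<bar>x - real_of_int ks / 2 ^ j\<bar> \<le> 2 * 2 powr ((\<eta> - 1) * real j)"
  proof -
    have "2 powr ((\<eta>' - 1) * real j) \<le> 2 powr ((\<eta> - 1) * real j)"
      using \<eta>'le(1) by (intro powr_mono mult_right_mono) auto
    then show ?thesis using xks by linarith
  qed
  have nb: "cmod (c j' k') \<le> 2 powr (- (H - \<epsilon>) * real j)" if jk: "(j', k') \<in> nbhd \<theta> \<omega> j ks" for j' k'
  proof -
    from jk have j1: "j \<le> j'" and j2: "real j' \<le> \<theta> j"
      and j3: "\<bar>real_of_int ks / 2 ^ j - real_of_int k' / 2 ^ j'\<bar> \<le> \<omega> j' / 2 ^ j"
      unfolding nbhd_def by auto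
    define T where "T = real j' - real j"
    have T0: "0 \<le> T" unfolding T_def using j1 by simp
    have Tle: "T \<le> \<delta> * real j" unfolding T_def using j2 th1 by simp
    have "int j' \<le> \<lfloor>\<theta> j\<rfloor>" using j2 by (simp add: le_floor_iff)
    then have "j' \<le> nat \<lfloor>\<theta> j\<rfloor>" by simp
    then have W2: "\<omega> j' \<le> 2 powr (\<delta> * real j)" using om3 ommono by (meson monoD order_trans)
    have Wj: "\<omega> j \<le> \<omega> j'" using j1 ommono by (simp add: monoD)
    with om1 have W1: "1 \<le> \<omega> j'" by simp
    define D' where "D' = \<bar>2 ^ j' * x - real_of_int k'\<bar>"
    have pT: "(2::real) ^ j' / 2 ^ j = 2 powr T"
      unfolding T_def by (simp add: powr_realpow[symmetric] powr_diff)
    have "\<bar>x - real_of_int k' / 2 ^ j'\<bar> \<le> \<bar>x - real_of_int ks / 2 ^ j\<bar> + \<bar>real_of_int ks / 2 ^ j - real_of_int k' / 2 ^ j'\<bar>"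
      by arith
    also have "\<dots> \<le> (P - 1 + \<omega> j) / 2 ^ j + \<omega> j' / 2 ^ j" using xks0 j3 by simp
    also have "\<dots> \<le> (P - 1 + 2 * \<omega> j') / 2 ^ j" using Wj by (simp add: add_divide_distrib[symmetric] divide_right_mono)
    finally have dd: "\<bar>x - real_of_int k' / 2 ^ j'\<bar> \<le> (P - 1 + 2 * \<omega> j') / 2 ^ j" .
    have "D' = 2 ^ j' * \<bar>x - real_of_int k' / 2 ^ j'\<bar>"
    proof -
      have "2 ^ j' * x - real_of_int k' = 2 ^ j' * (x - real_of_int k' / 2 ^ j')" by (simp add: field_simps)
      then show ?thesis unfolding D'_def by (simp add: abs_mult)
    qed
    also have "\<dots> \<le> 2 ^ j' * ((P - 1 + 2 * \<omega> j') / 2 ^ j)" using dd by (intro mult_left_mono) auto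
    also have "\<dots> = 2 powr T * (P - 1 + 2 * \<omega> j')" using pT by (simp add: field_simps)
    finally have D'le: "D' \<le> 2 powr T * (P - 1 + 2 * \<omega> j')" .
    have pT1: "2 powr T \<ge> 1" using T0 by (intro ge_one_powr_ge_zero) auto
    have "1 + D' \<le> 2 powr T + 2 powr T * (P - 1 + 2 * \<omega> j')" using D'le pT1 by linarith
    also have "\<dots> = 2 powr T * (P + 2 * \<omega> j')" by (simp add: algebra_simps)
    also have "\<dots> \<le> 2 powr T * (4 * 2 powr (\<eta>' * real j) * \<omega> j')"
    proof -
      have a1: "P \<le> 2 powr (\<eta>' * real j) * \<omega> j'" using Pb W1
        by (smt (verit) mult_left_mono powr_ge_zero mult.commute mult_cancel_left1)
      have "1 \<le> 2 powr (\<eta>' * real j)" using \<eta>'pos by (intro ge_one_powr_ge_zero) auto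
      then have a2: "\<omega> j' \<le> 2 powr (\<eta>' * real j) * \<omega> j'" using W1 by (simp add: mult_le_cancel_right1)
      from a1 a2 W1 have "P + 2 * \<omega> j' \<le> 4 * (2 powr (\<eta>' * real j) * \<omega> j')" by linarith
      then have "P + 2 * \<omega> j' \<le> 4 * 2 powr (\<eta>' * real j) * \<omega> j'" by (simp only: mult.assoc)
      then show ?thesis by (intro mult_left_mono) auto
    qed
    finally have D'b: "1 + D' \<le> 2 powr T * 4 * 2 powr (\<eta>' * real j) * \<omega> j'" by (simp add: mult_ac)
    have cm: "cmod (c j' k') \<le> C0 * 2 powr (- s1 * (real j + T)) * (1 + D') powr s0"
      using UB[of j' k'] unfolding D'_def T_def by simp
    show ?thesis
      using point_bound[OF C0 s0 \<delta>pos T0 Tle W1 W2 _ D'b C0b \<delta>le s0\<eta> s1(2) cm ep] unfolding D'_def by simp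
  qed
  have jkin: "(j, k) \<in> nbhd \<theta> \<omega> j ks"
  proof -
    have "\<bar>real_of_int ks / 2 ^ j - real_of_int k / 2 ^ j\<bar> = \<bar>real_of_int k - real_of_int ks\<bar> / 2 ^ j"
      by (simp add: diff_divide_distrib[symmetric] abs_minus_commute)
    also have "\<dots> \<le> \<omega> j / 2 ^ j" using dk by (simp add: divide_right_mono)
    finally show ?thesis unfolding nbhd_def using thge[of j] by simp
  qed
  have bdd: "bdd_above ((\<lambda>jk'. cmod (c (fst jk') (snd jk'))) ` nbhd \<theta> \<omega> j ks)"
    using nb by (intro bdd_aboveI2[where M="2 powr (- (H - \<epsilon>) * real j)"]) auto
  have Lup: "leader \<theta> \<omega> c j ks \<le> 2 powr (- (H - \<epsilon>) * real j)"
    unfolding leader_def using jkin nb by (intro cSUP_least) auto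
  have Llow1: "cmod (c j k) \<le> leader \<theta> \<omega> c j ks"
    unfolding leader_def using cSUP_upper[OF jkin bdd] by simp
  have "2 powr (- (H + \<epsilon>) * real j) \<le> cmod (c j k)"
  proof -
    have b1: "2 powr (- (H + \<epsilon>) * real j) \<le> 2 powr (- (H + \<epsilon>/2) * real j)"
      using ep by (intro powr_mono mult_right_mono) auto
    have "1 \<le> 2 powr (\<epsilon> * real J')" using ep by (intro ge_one_powr_ge_zero) auto
    then have b2: "1 * 1 \<le> C0 * 2 powr (\<epsilon> * real J')" using C0 by (intro mult_mono) auto
    have b3: "1 \<le> P powr (s0 + \<sigma>)" using P1 s0 \<sigma>pos by (intro ge_one_powr_ge_zero) auto
    have "2 powr (- (H + \<epsilon>/2) * real j) \<le> (C0 * 2 powr (\<epsilon> * real J')) * 2 powr (- (H + \<epsilon>/2) * real j) * P powr (s0 + \<sigma>)"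
    proof -
      have "2 powr (- (H + \<epsilon>/2) * real j) = 1 * 2 powr (- (H + \<epsilon>/2) * real j) * 1" by simp
      also have "\<dots> \<le> (C0 * 2 powr (\<epsilon> * real J')) * 2 powr (- (H + \<epsilon>/2) * real j) * P powr (s0 + \<sigma>)"
        using b2 b3 by (intro mult_mono) auto
      finally show ?thesis .
    qed
    then show ?thesis using b1 viol[folded P_def] by linarith
  qed
  with Llow1 have "2 powr (- (H + \<epsilon>) * real j) \<le> leader \<theta> \<omega> c j ks" by linarith
  then show ?thesis using jJ(1) ksK Lup rad by blast
qed





lemma geom_tail:
  fixes \<rho> :: real assumes "0 \<le> \<rho>" "\<rho> < 1"
  shows "(\<Sum>j<M. if J \<le> j then \<rho> ^ j else 0) \<le> \<rho> ^ J / (1 - \<rho>)"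
proof -
  have inv: "(1 - \<rho>) * (\<Sum>j<M. if J \<le> j then \<rho> ^ j else 0) = (if M \<le> J then 0 else \<rho> ^ J - \<rho> ^ M)" for M
  proof (induction M)
    case 0 then show ?case by simp
  next
    case (Suc M)
    have "(1 - \<rho>) * (\<Sum>j<Suc M. if J \<le> j then \<rho> ^ j else 0)
        = (if M \<le> J then 0 else \<rho> ^ J - \<rho> ^ M) + (1 - \<rho>) * (if J \<le> M then \<rho> ^ M else 0)"
      using Suc.IH by (simp add: algebra_simps)
    also have "\<dots> = (if Suc M \<le> J then 0 else \<rho> ^ J - \<rho> ^ Suc M)"
      by (cases "M < J"; cases "M = J") (auto simp: algebra_simps)
    finally show ?case .
  qed
  have "(1 - \<rho>) * (\<Sum>j<M. if J \<le> j then \<rho> ^ j else 0) \<le> \<rho> ^ J"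
    unfolding inv using assms by auto
  then show ?thesis using assms by (simp add: le_divide_eq mult.commute)
qed

lemma powr_between:
  fixes d H \<epsilon> p :: real and j :: nat
  assumes "\<epsilon> > 0" "2 powr (- (H + \<epsilon>) * real j) \<le> d" "d \<le> 2 powr (- (H - \<epsilon>) * real j)"
  shows "2 powr (- (H * p + \<epsilon> * \<bar>p\<bar>) * real j) \<le> d powr p"
proof (cases "p \<ge> 0")
  case True
  have "2 powr (- (H * p + \<epsilon> * \<bar>p\<bar>) * real j) = (2 powr (- (H + \<epsilon>) * real j)) powr p"
    using True by (simp add: powr_powr algebra_simps)
  also have "\<dots> \<le> d powr p" using True assms(2) by (intro powr_mono2) auto
  finally show ?thesis .
next
  case False
  have "2 powr (- (H * p + \<epsilon> * \<bar>p\<bar>) * real j) = (2 powr (- (H - \<epsilon>) * real j)) powr p"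
    using False by (simp add: powr_powr algebra_simps)
  also have "\<dots> \<le> d powr p" using False assms(2,3)
    by (intro powr_mono2') (auto intro: less_le_trans[OF _ assms(2)])
  finally show ?thesis .
qed

lemma choose_z:
  assumes "ereal (H * p) - Z + 1 < ereal s"
  shows "\<exists>z. ereal z < Z \<and> H * p - z + 1 < s"
proof (cases Z)
  case (real w)
  then have "H * p - w + 1 < s" using assms by simp
  define z where "z = w - (s - (H * p - w + 1)) / 2"
  have "z < w" using \<open>H * p - w + 1 < s\<close> unfolding z_def by (simp add: field_simps)
  have "H * p - z + 1 < s" using \<open>H * p - w + 1 < s\<close> unfolding z_def by (simp add: field_simps)
  note this \<open>z < w\<close>
  then show ?thesis using real by auto
next
  case PInf
  then show ?thesis by (intro exI[where x="H * p + 2 - s"]) auto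
next
  case MInf
  then show ?thesis using assms by simp
qed

definition Gset where
  "Gset \<theta> \<omega> c a b H \<epsilon> j = {k \<in> Kset \<omega> a b j. 2 powr (- (H + \<epsilon>) * real j) \<le> leader \<theta> \<omega> c j k
      \<and> leader \<theta> \<omega> c j k \<le> 2 powr (- (H - \<epsilon>) * real j)}"

lemma Gset_finite: "finite (Gset \<theta> \<omega> c a b H \<epsilon> j)"
  unfolding Gset_def using Kset_finite by simp

lemma good_count:
  assumes om: "subexp_growth \<omega>" and z: "ereal z < scaling_fun \<theta> \<omega> c a b p" and ep: "\<epsilon> > 0"
  shows "eventually (\<lambda>j. real (card (Gset \<theta> \<omega> c a b H \<epsilon> j)) \<le> 2 powr ((1 - z + H * p + \<epsilon> * \<bar>p\<bar>) * real j)) sequentially"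
  using count_bound[OF om z]
proof eventually_elim
  case (elim j)
  have "real (card (Gset \<theta> \<omega> c a b H \<epsilon> j)) \<le> 2 powr ((1 - z) * real j) / 2 powr (- (H * p + \<epsilon> * \<bar>p\<bar>) * real j)"
  proof (rule card_bound[OF Kset_finite, where f="\<lambda>k. leader \<theta> \<omega> c j k powr p"])
    show "Gset \<theta> \<omega> c a b H \<epsilon> j \<subseteq> Kset \<omega> a b j" unfolding Gset_def by auto
    show "\<And>k. 0 \<le> leader \<theta> \<omega> c j k powr p" by simp
    show "\<And>k. k \<in> Gset \<theta> \<omega> c a b H \<epsilon> j \<Longrightarrow> 2 powr (- (H * p + \<epsilon> * \<bar>p\<bar>) * real j) \<le> leader \<theta> \<omega> c j k powr p"
      unfolding Gset_def using powr_between[OF ep] by auto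
    show "(\<Sum>k\<in>Kset \<omega> a b j. leader \<theta> \<omega> c j k powr p) \<le> 2 powr ((1 - z) * real j)" using elim .
    show "0 < 2 powr (- (H * p + \<epsilon> * \<bar>p\<bar>) * real j)" by simp
  qed
  also have "\<dots> = 2 powr ((1 - z + H * p + \<epsilon> * \<bar>p\<bar>) * real j)"
    by (simp add: powr_diff[symmetric] algebra_simps)
  finally show ?case .
qed

lemma params:
  fixes s z H p :: real
  assumes "s \<ge> 0" "H * p - z + 1 < s"
  shows "\<exists>\<epsilon> \<eta>. \<epsilon> > 0 \<and> \<eta> > 0 \<and> \<eta> < 1 \<and> (1 - z + H * p + \<epsilon> * \<bar>p\<bar>) + (\<eta> - 1) * s < 0"
proof -
  define g where "g = s - (H * p - z + 1)"
  have g: "g > 0" using assms unfolding g_def by simp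
  define pp where "pp = \<bar>p\<bar> + 1"
  define ss where "ss = s + 1"
  have pp: "pp > 0" unfolding pp_def by (simp add: add_pos_nonneg)
  have ss: "ss > 0" unfolding ss_def using assms(1) by simp
  define \<epsilon> where "\<epsilon> = g / (4 * pp)"
  define \<eta> where "\<eta> = min (1/2) (g / (4 * ss))"
  have ep: "\<epsilon> > 0" unfolding \<epsilon>_def using g pp by simp
  have et: "\<eta> > 0" "\<eta> < 1" unfolding \<eta>_def using g ss by auto
  have "\<epsilon> * pp = g / 4" unfolding \<epsilon>_def using pp by simp
  then have e1: "\<epsilon> * \<bar>p\<bar> \<le> g / 4" using ep unfolding pp_def by (simp add: algebra_simps)
  have "\<eta> \<le> g / (4 * ss)" unfolding \<eta>_def by simp
  then have "\<eta> * ss \<le> g / 4" using ss by (simp add: le_divide_eq mult.commute)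
  then have e2: "\<eta> * s \<le> g / 4" using et unfolding ss_def by (simp add: algebra_simps)
  have "(1 - z + H * p + \<epsilon> * \<bar>p\<bar>) + (\<eta> - 1) * s = - g + \<epsilon> * \<bar>p\<bar> + \<eta> * s"
    unfolding g_def by (simp add: algebra_simps)
  also have "\<dots> < 0" using e1 e2 g by linarith
  finally show ?thesis using ep et by blast
qed





lemma E_empty:
  assumes th: "subpoly_growth \<theta>" and om: "subexp_growth \<omega>"
    and R: "ereal (H * p) - scaling_fun \<theta> \<omega> c a b p + 1 < 0"
  shows "{x \<in> {a<..<b}. weak_scaling_exp c x = ereal H} = {}"
proof (rule ccontr)
  assume "{x \<in> {a<..<b}. weak_scaling_exp c x = ereal H} \<noteq> {}"
  then obtain x where xa: "a < x" and xb: "x < b" and hx: "weak_scaling_exp c x = ereal H" by auto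
  from R have "ereal (H * p) - scaling_fun \<theta> \<omega> c a b p + 1 < ereal 0" by (simp add: zero_ereal_def)
  from choose_z[OF this] obtain z where z: "ereal z < scaling_fun \<theta> \<omega> c a b p" "H * p - z + 1 < 0" by blast
  from params[OF order.refl z(2)] obtain \<epsilon> \<eta> where ep: "\<epsilon> > 0" and et: "\<eta> > 0"
    and A: "(1 - z + H * p + \<epsilon> * \<bar>p\<bar>) + (\<eta> - 1) * 0 < 0" by blast
  define A where "A = 1 - z + H * p + \<epsilon> * \<bar>p\<bar>"
  have Aneg: "A < 0" using A unfolding A_def by simp
  obtain N where N: "\<And>j. j \<ge> N \<Longrightarrow> real (card (Gset \<theta> \<omega> c a b H \<epsilon> j)) \<le> 2 powr (A * real j)"
    using good_count[OF om z(1) ep, of H] unfolding eventually_sequentially A_def by blast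
  obtain j k where j: "j \<ge> max N 1" and k: "k \<in> Kset \<omega> a b j"
    and b1: "2 powr (- (H + \<epsilon>) * real j) \<le> leader \<theta> \<omega> c j k"
    and b2: "leader \<theta> \<omega> c j k \<le> 2 powr (- (H - \<epsilon>) * real j)"
    using witness[OF th om xa xb hx ep et, of "max N 1"] by blast
  have "k \<in> Gset \<theta> \<omega> c a b H \<epsilon> j" unfolding Gset_def using k b1 b2 by simp
  then have "card (Gset \<theta> \<omega> c a b H \<epsilon> j) \<ge> 1" using Gset_finite
    by (metis One_nat_def Suc_leI card_gt_0_iff empty_iff)
  moreover have "2 powr (A * real j) < 1"
  proof -
    have "A * real j < 0" using Aneg j by (simp add: mult_neg_pos)
    then show ?thesis by (simp add: powr_less_one)
  qed
  ultimately show False using N[of j] j by simp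
qed



lemma sum_prod_decode_le:
  fixes g :: "nat \<times> nat \<Rightarrow> real"
  assumes "\<And>q. 0 \<le> g q"
  shows "(\<Sum>m<M. g (prod_decode m)) \<le> (\<Sum>j<M. \<Sum>n<M. g (j, n))"
proof -
  have "(\<Sum>m<M. g (prod_decode m)) = sum g (prod_decode ` {..<M})"
    by (simp add: sum.reindex inj_prod_decode)
  also have "\<dots> \<le> sum g ({..<M} \<times> {..<M})"
  proof (rule sum_mono2)
    show "prod_decode ` {..<M} \<subseteq> {..<M} \<times> {..<M}"
    proof
      fix q assume "q \<in> prod_decode ` {..<M}"
      then obtain m where m: "m < M" "q = prod_decode m" by auto
      obtain j n where q: "q = (j, n)" by (cases q)
      have "prod_encode (j, n) = m" using m q by (metis prod_decode_inverse)
      then have "j \<le> m" "n \<le> m" using le_prod_encode_1[of j n] le_prod_encode_2[of n j] by auto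
      then show "q \<in> {..<M} \<times> {..<M}" using m(1) q by simp
    qed
  qed (auto simp: assms)
  also have "\<dots> = (\<Sum>j<M. \<Sum>n<M. g (j, n))" by (simp add: sum.cartesian_product)
  finally show ?thesis .
qed

lemma sum_card_le:
  fixes c :: real assumes "c \<ge> 0" "finite G"
  shows "(\<Sum>n<M. if P \<and> int_decode n \<in> G then c else 0) \<le> (if P then real (card G) * c else 0)"
proof (cases P)
  case True
  have "(\<Sum>n<M. if P \<and> int_decode n \<in> G then c else 0) = (\<Sum>n\<in>{n\<in>{..<M}. int_decode n \<in> G}. c)"
    using True by (simp add: sum.inter_filter[symmetric])
  also have "\<dots> = real (card {n\<in>{..<M}. int_decode n \<in> G}) * c" by simp
  also have "\<dots> \<le> real (card G) * c"
  proof -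
    have "card {n\<in>{..<M}. int_decode n \<in> G} \<le> card G"
      by (rule card_inj_on_le[OF inj_int_decode _ assms(2)]) auto
    then show ?thesis using assms(1) by (intro mult_right_mono) auto
  qed
  finally show ?thesis using True by simp
qed simp

lemma E_null:
  assumes th: "subpoly_growth \<theta>" and om: "subexp_growth \<omega>" and s0: "s \<ge> 0"
    and R: "ereal (H * p) - scaling_fun \<theta> \<omega> c a b p + 1 < ereal s"
  shows "hausdorff_measure s {x \<in> {a<..<b}. weak_scaling_exp c x = ereal H} = 0"
proof -
  define E where "E = {x \<in> {a<..<b}. weak_scaling_exp c x = ereal H}"
  from choose_z[OF R] obtain z where z: "ereal z < scaling_fun \<theta> \<omega> c a b p" "H * p - z + 1 < s" by blast
  from params[OF s0 z(2)] obtain \<epsilon> \<eta> where ep: "\<epsilon> > 0" and et: "\<eta> > 0" "\<eta> < 1"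
    and A: "(1 - z + H * p + \<epsilon> * \<bar>p\<bar>) + (\<eta> - 1) * s < 0" by blast
  define A where "A = 1 - z + H * p + \<epsilon> * \<bar>p\<bar>"
  define q where "q = A + (\<eta> - 1) * s"
  have qneg: "q < 0" using A unfolding q_def A_def by simp
  define \<rho> where "\<rho> = 2 powr q"
  have \<rho>: "0 < \<rho>" "\<rho> < 1" unfolding \<rho>_def using qneg by (auto simp: powr_less_one)
  obtain N0 where N0: "\<And>j. j \<ge> N0 \<Longrightarrow> real (card (Gset \<theta> \<omega> c a b H \<epsilon> j)) \<le> 2 powr (A * real j)"
    using good_count[OF om z(1) ep, of H] unfolding eventually_sequentially A_def by blast
  define G where "G = Gset \<theta> \<omega> c a b H \<epsilon>"
  define r where "r j = 2 * 2 powr ((\<eta> - 1) * real j)" for j :: nat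
  have rpos: "r j > 0" for j unfolding r_def by simp
  have cardb: "real (card (G j)) * (2 * r j) powr s \<le> 4 powr s * \<rho> ^ j" if "j \<ge> N0" for j
  proof -
    have eq: "(2 * r j) powr s = 4 powr s * 2 powr ((\<eta> - 1) * s * real j)"
      unfolding r_def by (simp add: powr_mult powr_powr algebra_simps)
    then have "real (card (G j)) * (2 * r j) powr s \<le> 2 powr (A * real j) * (4 powr s * 2 powr ((\<eta> - 1) * s * real j))"
      using N0[OF that] unfolding G_def eq by (intro mult_right_mono) auto
    also have "\<dots> = 4 powr s * 2 powr (q * real j)" unfolding q_def
      by (simp add: powr_add[symmetric] algebra_simps)
    also have "\<dots> = 4 powr s * \<rho> ^ j" unfolding \<rho>_def by (simp add: powr_powr[symmetric] powr_realpow)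
    finally show ?thesis .
  qed
  have "hausdorff_pre s \<delta> E = 0" if dpos: "\<delta> > 0" for \<delta>
  proof -
    have small: "hausdorff_pre s \<delta> E \<le> 0 + ennreal e" if epos: "e > 0" for e
    proof -
      have ev1: "eventually (\<lambda>J. 4 * 2 powr ((\<eta> - 1) * real J) \<le> \<delta>) sequentially"
      proof -
        have "(\<lambda>J. 2 powr ((\<eta> - 1) * real J)) \<longlonglongrightarrow> 0" using et by (intro pow2_tendsto0) simp
        then have "eventually (\<lambda>J. 2 powr ((\<eta> - 1) * real J) < \<delta> / 4) sequentially"
          using dpos by (intro order_tendstoD(2)) auto
        then show ?thesis by eventually_elim simp
      qed
      have ev2: "eventually (\<lambda>J. 4 powr s * \<rho> ^ J / (1 - \<rho>) \<le> e) sequentially"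
      proof -
        have "(\<lambda>J. \<rho> ^ J) \<longlonglongrightarrow> 0" using \<rho> by (intro LIMSEQ_power_zero) simp
        then have "eventually (\<lambda>J. \<rho> ^ J < e * (1 - \<rho>) / 4 powr s) sequentially"
          using epos \<rho> by (intro order_tendstoD(2)) auto
        then show ?thesis
        proof eventually_elim
          case (elim J)
          then have "4 powr s * \<rho> ^ J < e * (1 - \<rho>)" by (simp add: field_simps)
          then show ?case using \<rho> by (simp add: field_simps)
        qed
      qed
      obtain J where J1: "4 * 2 powr ((\<eta> - 1) * real J) \<le> \<delta>" and J2: "4 powr s * \<rho> ^ J / (1 - \<rho>) \<le> e"
        and J3: "J \<ge> N0"
        using eventually_conj[OF ev1 eventually_conj[OF ev2 eventually_ge_at_top[of N0]]]
        unfolding eventually_sequentially by blast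
      define U where "U m = (if J \<le> fst (prod_decode m) \<and> int_decode (snd (prod_decode m)) \<in> G (fst (prod_decode m))
          then cball (real_of_int (int_decode (snd (prod_decode m))) / 2 ^ fst (prod_decode m)) (r (fst (prod_decode m)))
          else {})" for m
      define gg where "gg q = (if J \<le> fst q \<and> int_decode (snd q) \<in> G (fst q) then (2 * r (fst q)) powr s else 0)" for q
      have fU: "diameter (U m) powr s = gg (prod_decode m)" for m
        unfolding U_def gg_def using rpos by (auto simp: diameter_cball less_le_not_le)
      have cover: "E \<subseteq> (\<Union>m. U m)"
      proof
        fix x assume "x \<in> E"
        then have xa: "a < x" and xb: "x < b" and hx: "weak_scaling_exp c x = ereal H" unfolding E_def by auto
        obtain j k where j: "j \<ge> J" and k: "k \<in> Kset \<omega> a b j"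
          and b1: "2 powr (- (H + \<epsilon>) * real j) \<le> leader \<theta> \<omega> c j k"
          and b2: "leader \<theta> \<omega> c j k \<le> 2 powr (- (H - \<epsilon>) * real j)"
          and b3: "\<bar>x - real_of_int k / 2 ^ j\<bar> \<le> 2 * 2 powr ((\<eta> - 1) * real j)"
          using witness[OF th om xa xb hx ep et(1), of J] by blast
        have kG: "k \<in> G j" unfolding G_def Gset_def using k b1 b2 by simp
        define m where "m = prod_encode (j, int_encode k)"
        have pm: "prod_decode m = (j, int_encode k)" unfolding m_def by simp
        have "x \<in> U m" unfolding U_def pm using j kG b3
          by (simp add: int_encode_inverse dist_real_def r_def abs_minus_commute)
        then show "x \<in> (\<Union>m. U m)" by blast
      qed
      have bnd: "bounded (U m)" for m unfolding U_def by auto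
      have diam: "diameter (U m) \<le> \<delta>" for m
      proof (cases "J \<le> fst (prod_decode m) \<and> int_decode (snd (prod_decode m)) \<in> G (fst (prod_decode m))")
        case True
        define j where "j = fst (prod_decode m)"
        have "J \<le> j" using True unfolding j_def by simp
        then have "2 powr ((\<eta> - 1) * real j) \<le> 2 powr ((\<eta> - 1) * real J)"
          using et by (intro powr_mono mult_left_mono_neg) auto
        then have "2 * r j \<le> \<delta>" using J1 unfolding r_def by linarith
        then show ?thesis unfolding U_def using True rpos[of j] by (simp add: diameter_cball j_def less_le_not_le)
      next
        case False then show ?thesis unfolding U_def using dpos by auto
      qed
      have gg0: "0 \<le> gg q" for q unfolding gg_def by simp
      have partial: "(\<Sum>m<M. diameter (U m) powr s) \<le> 4 powr s * \<rho> ^ J / (1 - \<rho>)" for M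
      proof -
        have "(\<Sum>m<M. diameter (U m) powr s) = (\<Sum>m<M. gg (prod_decode m))" by (simp add: fU)
        also have "\<dots> \<le> (\<Sum>j<M. \<Sum>n<M. gg (j, n))" by (rule sum_prod_decode_le[OF gg0])
        also have "\<dots> \<le> (\<Sum>j<M. if J \<le> j then real (card (G j)) * (2 * r j) powr s else 0)"
        proof (rule sum_mono)
          fix j assume "j \<in> {..<M}"
          have "(\<Sum>n<M. gg (j, n)) = (\<Sum>n<M. if J \<le> j \<and> int_decode n \<in> G j then (2 * r j) powr s else 0)"
            unfolding gg_def by (simp only: fst_conv snd_conv)
          also have "\<dots> \<le> (if J \<le> j then real (card (G j)) * (2 * r j) powr s else 0)"
            by (rule sum_card_le) (auto simp: G_def Gset_finite)
          finally show "(\<Sum>n<M. gg (j, n)) \<le> (if J \<le> j then real (card (G j)) * (2 * r j) powr s else 0)" .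
        qed
        also have "\<dots> \<le> (\<Sum>j<M. 4 powr s * (if J \<le> j then \<rho> ^ j else 0))"
          using cardb J3 by (intro sum_mono) auto
        also have "\<dots> = 4 powr s * (\<Sum>j<M. if J \<le> j then \<rho> ^ j else 0)" by (simp add: sum_distrib_left)
        also have "\<dots> \<le> 4 powr s * (\<rho> ^ J / (1 - \<rho>))"
          using geom_tail[of \<rho> J M] \<rho> by (intro mult_left_mono) auto
        finally show ?thesis by simp
      qed
      have summ: "summable (\<lambda>m. diameter (U m) powr s)"
        by (rule summableI_nonneg_bounded[OF _ partial]) simp
      have "hausdorff_pre s \<delta> E \<le> (\<Sum>m. ennreal (diameter (U m) powr s))"
        unfolding hausdorff_pre_def using cover bnd diam by (intro INF_lower) auto
      also have "\<dots> = ennreal (\<Sum>m. diameter (U m) powr s)" by (rule suminf_ennreal2[OF _ summ]) simp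
      also have "\<dots> \<le> ennreal e"
      proof (rule ennreal_leI)
        have "(\<Sum>m. diameter (U m) powr s) \<le> 4 powr s * \<rho> ^ J / (1 - \<rho>)"
          by (rule suminf_le_const[OF summ partial])
        then show "(\<Sum>m. diameter (U m) powr s) \<le> e" using J2 by simp
      qed
      finally show ?thesis by simp
    qed
    have "hausdorff_pre s \<delta> E \<le> 0" by (rule ennreal_le_epsilon, rule small, assumption)
    then show ?thesis by simp
  qed
  then have "hausdorff_measure s E = 0" unfolding hausdorff_measure_def by simp
  then show ?thesis unfolding E_def .
qed





lemma dim_bound:
  assumes th: "subpoly_growth \<theta>" and om: "subexp_growth \<omega>"
  shows "hausdorff_dim {x \<in> {a<..<b}. weak_scaling_exp c x = ereal H}
           \<le> ereal (H * p) - scaling_fun \<theta> \<omega> c a b p + 1"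
proof (cases "{x \<in> {a<..<b}. weak_scaling_exp c x = ereal H} = {}")
  case True
  then show ?thesis unfolding hausdorff_dim_def by simp
next
  case False
  define E where "E = {x \<in> {a<..<b}. weak_scaling_exp c x = ereal H}"
  define R where "R = ereal (H * p) - scaling_fun \<theta> \<omega> c a b p + 1"
  have ne: "E \<noteq> {}" using False unfolding E_def .
  have "hausdorff_dim E \<le> y" if Ry: "R < y" for y
  proof (cases y)
    case (real r)
    show ?thesis
    proof (cases "r \<ge> 0")
      case True
      have "hausdorff_measure r E = 0" unfolding E_def
        using E_null[OF th om True] Ry real unfolding R_def by simp
      then have "ereal r \<in> (\<lambda>s. ereal s) ` {s. 0 \<le> s \<and> hausdorff_measure s E = 0}" using True by auto
      then show ?thesis unfolding hausdorff_dim_def using ne real by (auto intro: INF_lower)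
    next
      case False
      then have "R < 0" using Ry real by (simp add: zero_ereal_def) (metis ereal_less_eq(3) less_ereal.simps(1) not_le order.strict_trans)
      then have "E = {}" unfolding E_def R_def using E_empty[OF th om] by blast
      then show ?thesis using ne by simp
    qed
  next
    case PInf then show ?thesis by simp
  next
    case MInf then show ?thesis using Ry by simp
  qed
  then have "hausdorff_dim E \<le> R" by (rule dense_ge)
  then show ?thesis unfolding E_def R_def .
qed


theorem mainTheorem2:
  fixes \<psi> :: "real \<Rightarrow> real"
    and f :: "(real \<Rightarrow> complex) \<Rightarrow> complex"
    and \<theta> \<omega> :: "nat \<Rightarrow> real"
    and a b :: real
  assumes psi_smooth: "schwartz_real \<psi>"
    and psi_basis: "orthonormal_wavelet \<psi>"
    and f_temp: "tempered_distribution f"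
    and theta: "subpoly_growth \<theta>"
    and omega: "subexp_growth \<omega>"
    and ab: "a < b"
  shows "(\<forall>H::real.
            hausdorff_dim {x \<in> {a<..<b}. weak_scaling_exp (wcoef \<psi> f) x = ereal H}
              \<le> (INF p. ereal (H * p) - scaling_fun \<theta> \<omega> (wcoef \<psi> f) a b p + 1))
       \<and> (\<forall>c::real. (\<forall>p. scaling_fun \<theta> \<omega> (wcoef \<psi> f) a b p = ereal (c * p)) \<longrightarrow>
            (\<forall>H::real. H \<noteq> c \<longrightarrow>
               {x \<in> {a<..<b}. weak_scaling_exp (wcoef \<psi> f) x = ereal H} = {}))"
proof (intro conjI allI impI)
  fix H :: real
  show "hausdorff_dim {x \<in> {a<..<b}. weak_scaling_exp (wcoef \<psi> f) x = ereal H}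
              \<le> (INF p. ereal (H * p) - scaling_fun \<theta> \<omega> (wcoef \<psi> f) a b p + 1)"
    by (intro INF_greatest dim_bound[OF theta omega])
next
  fix c0 H :: real
  assume lin: "\<forall>p. scaling_fun \<theta> \<omega> (wcoef \<psi> f) a b p = ereal (c0 * p)" and Hc: "H \<noteq> c0"
  define d where "d = H - c0"
  define p where "p = - 2 / d"
  have hc: "d \<noteq> 0" using Hc unfolding d_def by simp
  have "d * p = -2" unfolding p_def using hc by simp
  moreover have "H * p - c0 * p = d * p" unfolding d_def by (simp add: algebra_simps)
  ultimately have "H * p - c0 * p + 1 = -1" by simp
  then have "ereal (H * p) - scaling_fun \<theta> \<omega> (wcoef \<psi> f) a b p + 1 < 0"
    using lin by (simp add: one_ereal_def)
  then show "{x \<in> {a<..<b}. weak_scaling_exp (wcoef \<psi> f) x = ereal H} = {}"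
    by (rule E_empty[OF theta omega])
qed


end
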